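(* Let $n\ge 4$, and let $u,v$ be two vertices of the cycle $C_n$ that are not adjacent in $C_n$. Then $\mathscr{Z}^{\rm TAR}(C_n)=\mathscr{Z}^{\rm TAR}(C_n+uv)$; in fact $C_n$ and $C_n+uv$ have exactly the same zero forcing sets.
   Context: $C_n+uv$ is the graph on $V(C_n)$ with edge set $E(C_n)\cup\{uv\}$. Zero forcing: starting with a set $S$ of blue vertices, a blue vertex $v$ may turn blue a white vertex $w$ if $w$ is the only white neighbor of $v$; $S$ is a zero forcing set if repeated application colors all vertices blue. $\mathscr{Z}^{\rm TAR}(G)$ has vertices the zero forcing sets of $G$, two adjacent iff their symmetric difference has size 1. *)

theory Defs
  imports Main
begin

definition cycle_adj :: "nat \<Rightarrow> nat \<Rightarrow> nat \<Rightarrow> bool" where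
  "cycle_adj n i j \<longleftrightarrow> i < n \<and> j < n \<and> i \<noteq> j \<and> (j = Suc i mod n \<or> i = Suc j mod n)"

definition add_edge :: "('a \<Rightarrow> 'a \<Rightarrow> bool) \<Rightarrow> 'a \<Rightarrow> 'a \<Rightarrow> ('a \<Rightarrow> 'a \<Rightarrow> bool)" where
  "add_edge E u v = (\<lambda>x y. E x y \<or> (x = u \<and> y = v) \<or> (x = v \<and> y = u))"

inductive_set zf_closure :: "'a set \<Rightarrow> ('a \<Rightarrow> 'a \<Rightarrow> bool) \<Rightarrow> 'a set \<Rightarrow> 'a set"
  for V E S where
  base: "s \<in> S \<Longrightarrow> s \<in> zf_closure V E S"
| force: "x \<in> zf_closure V E S \<Longrightarrow> w \<in> V \<Longrightarrow> E x w \<Longrightarrow>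
          (\<forall>y\<in>V. E x y \<and> y \<noteq> w \<longrightarrow> y \<in> zf_closure V E S) \<Longrightarrow> w \<in> zf_closure V E S"

definition zero_forcing_set :: "'a set \<Rightarrow> ('a \<Rightarrow> 'a \<Rightarrow> bool) \<Rightarrow> 'a set \<Rightarrow> bool" where
  "zero_forcing_set V E S \<longleftrightarrow> S \<subseteq> V \<and> zf_closure V E S = V"

definition ZF_TAR :: "'a set \<Rightarrow> ('a \<Rightarrow> 'a \<Rightarrow> bool) \<Rightarrow> ('a set set \<times> ('a set \<times> 'a set) set)" where
  "ZF_TAR V E = ({S. zero_forcing_set V E S},
     {(S, T). zero_forcing_set V E S \<and> zero_forcing_set V E T \<and> card ((S - T) \<union> (T - S)) = 1})"

end

theory Submission
  imports Defs
begin

lemma suc_mod_cancel: "Suc y mod n = Suc z mod n \<Longrightarrow> y mod n = z mod (n::nat)"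
  by (metis mod_Suc nat.inject not_less_eq zero_less_Suc)

lemma closure_sub:
  assumes "S \<subseteq> V"
  shows "zf_closure V E S \<subseteq> V"
proof
  fix x assume "x \<in> zf_closure V E S"
  then show "x \<in> V"
    by (induction rule: zf_closure.induct) (use assms in auto)
qed

lemma E_lt:
  assumes "add_edge (cycle_adj n) u v x y" "u < n" "v < n"
  shows "x < n"
  using assms by (auto simp: add_edge_def cycle_adj_def)

lemma no_adj:
  fixes n u v :: nat
  assumes n3: "n \<ge> 3" and "u < n" "v < n"
    and noadj: "\<forall>i<n. i \<in> S \<longrightarrow> Suc i mod n \<notin> S"
  shows "zf_closure {..<n} (add_edge (cycle_adj n) u v) S \<subseteq> S"
proof
  fix x assume "x \<in> zf_closure {..<n} (add_edge (cycle_adj n) u v) S"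
  then show "x \<in> S"
  proof (induction rule: zf_closure.induct)
    case (base s)
    then show ?case by simp
  next
    case (force x w)
    have xn: "x < n" using E_lt[OF force(3)] assms by simp
    show ?case
    proof (rule ccontr)
      assume wS: "w \<notin> S"
      define y1 where "y1 = Suc x mod n"
      define y0 where "y0 = (x + n - 1) mod n"
      have y1n: "y1 < n" using n3 by (simp add: y1_def)
      have y0n: "y0 < n" using n3 by (simp add: y0_def)
      have sy0: "Suc y0 mod n = x" unfolding y0_def using xn n3
        by (metis One_nat_def Suc_diff_Suc add_Suc_right add_diff_cancel_left' le_add2 less_le_trans mod_Suc_eq mod_add_self2 mod_less not_less_eq_eq numeral_3_eq_3 plus_1_eq_Suc zero_less_Suc Suc_leD)
      have x1: "y1 \<noteq> x" unfolding y1_def using xn n3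
        by (metis Suc_lessI mod_Suc mod_less n_not_Suc_n numeral_3_eq_3 not_less_eq_eq Suc_leD zero_neq_numeral)
      have x0: "y0 \<noteq> x" using sy0 y0n n3
        by (metis Suc_lessI mod_Suc mod_less n_not_Suc_n numeral_3_eq_3 not_less_eq_eq Suc_leD zero_neq_numeral)
      have y01: "y0 \<noteq> y1"
      proof
        assume "y0 = y1"
        then have "Suc y1 mod n = x" using sy0 by simp
        hence "Suc (Suc x mod n) mod n = x" by (simp add: y1_def)
        hence "Suc (Suc x) mod n = x mod n" using xn by (simp add: mod_Suc_eq)
        thus False using xn n3
          by (metis Suc_lessI Suc_n_not_n mod_Suc mod_less numeral_3_eq_3 not_less_eq_eq zero_neq_numeral Suc_leD)
      qed
      have E1: "add_edge (cycle_adj n) u v x y1"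
        using xn y1n x1 by (auto simp: add_edge_def cycle_adj_def y1_def)
      have E0: "add_edge (cycle_adj n) u v x y0"
        using xn y0n x0 sy0 by (auto simp: add_edge_def cycle_adj_def)
      have "y1 \<notin> S" using noadj force(4) xn by (simp add: y1_def)
      moreover have "y0 \<notin> S" using noadj y0n sy0 force(4) by metis
      moreover have "y1 \<in> S \<or> y0 \<in> S"
        using force(5) E1 E0 y1n y0n y01 by auto
      ultimately show False by blast
    qed
  qed
qed

lemma adj_all:
  fixes n u v :: nat
  assumes n3: "n \<ge> 3" and un: "u < n" and vn: "v < n" and uv: "u \<noteq> v"
    and SV: "S \<subseteq> {..<n}" and i: "i < n" "i \<in> S" "Suc i mod n \<in> S"
  shows "zf_closure {..<n} (add_edge (cycle_adj n) u v) S = {..<n}"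
proof -
  let ?E = "add_edge (cycle_adj n) u v"
  let ?C = "zf_closure {..<n} ?E S"
  have SC: "S \<subseteq> ?C" by (auto intro: zf_closure.base)
  have main: "Suc k < n \<Longrightarrow> \<exists>a<n. \<forall>j\<le>Suc k. (a + j) mod n \<in> ?C" for k
  proof (induction k)
    case 0
    show ?case
    proof (intro exI[of _ i] conjI allI impI)
      fix j assume "j \<le> Suc 0"
      then have "j = 0 \<or> j = 1" by auto
      then show "(i + j) mod n \<in> ?C" using i SC by auto
    qed (use i in auto)
  next
    case (Suc k)
    then obtain a where an: "a < n" and J: "\<forall>j\<le>Suc k. (a + j) mod n \<in> ?C" by auto
    define K where "K = Suc k"
    define b where "b = (a + K) mod n"
    have Kn: "K < n" "K \<ge> 1" using Suc.prems by (auto simp: K_def)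
    have bn: "b < n" using an n3 by (simp add: b_def)
    have bC: "b \<in> ?C" using J[rule_format, of "Suc k"] by (simp add: b_def K_def)
    have aC: "a \<in> ?C" using J an by (metis le0 add_0_right mod_less)
    have ab: "a \<noteq> b"
    proof
      assume "a = b"
      then have e: "a = (a + K) mod n" by (simp add: b_def)
      show False
      proof (cases "a + K < n")
        case True
        then show False using e Kn by simp
      next
        case False
        then have "(a + K) mod n = (a + K - n) mod n" by (simp add: mod_if)
        also have "\<dots> = a + K - n" using an Kn by simp
        finally show False using e Kn an \<open>\<not> a + K < n\<close> by linarith
      qed
    qed
    show ?case
    proof (cases "\<exists>p. ((b = u \<and> p = v) \<or> (b = v \<and> p = u)) \<and> (\<forall>j\<le>K. (a + j) mod n \<noteq> p)")
      case False
      define w where "w = (a + Suc K) mod n"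
      have wn: "w < n" using an n3 by (simp add: w_def)
      have wsb: "w = Suc b mod n" by (simp add: w_def b_def mod_Suc_eq)
      have bw: "b \<noteq> w" using wsb bn n3
        by (metis Suc_lessI mod_Suc mod_less n_not_Suc_n numeral_3_eq_3 not_less_eq_eq Suc_leD zero_neq_numeral)
      have wC: "w \<in> ?C"
      proof (rule zf_closure.force[OF bC])
        show "w \<in> {..<n}" using wn by simp
        show "?E b w" using bn wn bw wsb by (auto simp: add_edge_def cycle_adj_def)
        show "\<forall>y\<in>{..<n}. ?E b y \<and> y \<noteq> w \<longrightarrow> y \<in> ?C"
        proof (intro ballI impI)
          fix y assume yn: "y \<in> {..<n}" and Ey: "?E b y \<and> y \<noteq> w"
          have "cycle_adj n b y \<or> (b = u \<and> y = v) \<or> (b = v \<and> y = u)"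
            using Ey by (simp add: add_edge_def)
          moreover have "cycle_adj n b y \<Longrightarrow> y \<in> ?C"
          proof -
            assume "cycle_adj n b y"
            then have "b = Suc y mod n" using Ey wsb by (auto simp: cycle_adj_def)
            then have "Suc y mod n = Suc (a + k) mod n" by (simp add: b_def K_def)
            then have "y mod n = (a + k) mod n" by (rule suc_mod_cancel)
            then have "y = (a + k) mod n" using yn by simp
            then show "y \<in> ?C" using J by auto
          qed
          moreover have "(b = u \<and> y = v) \<or> (b = v \<and> y = u) \<Longrightarrow> y \<in> ?C"
            using False J K_def by blast
          ultimately show "y \<in> ?C" by blast
        qed
      qed
      show ?thesis
      proof (intro exI[of _ a] conjI allI impI)
        fix j assume "j \<le> Suc (Suc k)"
        then have "j \<le> Suc k \<or> j = Suc K" by (auto simp: K_def)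
        then show "(a + j) mod n \<in> ?C" using J wC w_def by auto
      qed (use an in auto)
    next
      case True
      then obtain p where p: "(b = u \<and> p = v) \<or> (b = v \<and> p = u)" and pJ: "\<forall>j\<le>K. (a + j) mod n \<noteq> p"
        by blast
      have ap: "a \<noteq> p" using pJ[rule_format, of 0] an by simp
      have auv: "a \<noteq> u" "a \<noteq> v" using ap ab p by auto
      define w where "w = (a + n - 1) mod n"
      have wn: "w < n" using n3 by (simp add: w_def)
      have sw: "Suc w mod n = a" unfolding w_def using an n3
        by (metis One_nat_def Suc_diff_Suc add_Suc_right add_diff_cancel_left' le_add2 less_le_trans mod_Suc_eq mod_add_self2 mod_less not_less_eq_eq numeral_3_eq_3 plus_1_eq_Suc zero_less_Suc Suc_leD)
      have aw: "a \<noteq> w" using sw wn n3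
        by (metis Suc_lessI mod_Suc mod_less n_not_Suc_n numeral_3_eq_3 not_less_eq_eq Suc_leD zero_neq_numeral)
      have wC: "w \<in> ?C"
      proof (rule zf_closure.force[OF aC])
        show "w \<in> {..<n}" using wn by simp
        show "?E a w" using an wn aw sw by (auto simp: add_edge_def cycle_adj_def)
        show "\<forall>y\<in>{..<n}. ?E a y \<and> y \<noteq> w \<longrightarrow> y \<in> ?C"
        proof (intro ballI impI)
          fix y assume yn: "y \<in> {..<n}" and Ey: "?E a y \<and> y \<noteq> w"
          then have ca: "cycle_adj n a y" using auv by (auto simp: add_edge_def)
          show "y \<in> ?C"
          proof (cases "y = Suc a mod n")
            case True
            then have "y = (a + 1) mod n" by simp
            then show ?thesis using J by auto
          next
            case False
            then have "a = Suc y mod n" using ca by (auto simp: cycle_adj_def)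
            then have "Suc y mod n = Suc w mod n" using sw by simp
            then have "y mod n = w mod n" by (rule suc_mod_cancel)
            then have "y = w" using yn wn by simp
            then show ?thesis using Ey by simp
          qed
        qed
      qed
      show ?thesis
      proof (intro exI[of _ w] conjI allI impI)
        fix j assume j: "j \<le> Suc (Suc k)"
        show "(w + j) mod n \<in> ?C"
        proof (cases j)
          case 0
          then show ?thesis using wC wn by simp
        next
          case (Suc j')
          have "(w + j) mod n = (a + n - 1 + Suc j') mod n"
            unfolding w_def Suc by (rule mod_add_left_eq)
          also have "\<dots> = (a + j' + n) mod n" using n3 by (intro arg_cong[where f="\<lambda>t. t mod n"]) simp
          also have "\<dots> = (a + j') mod n" by simp
          finally show ?thesis using J j Suc by auto
        qed
      qed (use wn in auto)
    qed
  qed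
  obtain a where an: "a < n" and J: "\<forall>j\<le>Suc (n - 2). (a + j) mod n \<in> ?C"
  proof -
    have "Suc (n - 2) < n" using n3 by simp
    then show ?thesis using main[of "n - 2"] that by blast
  qed
  show ?thesis
  proof
    show "?C \<subseteq> {..<n}" by (rule closure_sub[OF SV])
    show "{..<n} \<subseteq> ?C"
    proof
      fix x assume x: "x \<in> {..<n}"
      define j where "j = (x + n - a) mod n"
      have "j < n" using n3 by (simp add: j_def)
      then have "j \<le> Suc (n - 2)" using n3 by linarith
      moreover have "(a + j) mod n = x"
      proof -
        have "(a + j) mod n = (a + (x + n - a)) mod n" by (simp add: j_def mod_add_right_eq)
        also have "\<dots> = (x + n) mod n" using an by simp
        finally show ?thesis using x by simp
      qed
      ultimately show "x \<in> ?C" using J by auto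
    qed
  qed
qed

lemma zf_char:
  fixes n u v :: nat
  assumes n3: "n \<ge> 3" and un: "u < n" and vn: "v < n" and uv: "u \<noteq> v"
  shows "zero_forcing_set {..<n} (add_edge (cycle_adj n) u v) S
     \<longleftrightarrow> S \<subseteq> {..<n} \<and> (\<exists>i<n. i \<in> S \<and> Suc i mod n \<in> S)"
proof
  assume z: "zero_forcing_set {..<n} (add_edge (cycle_adj n) u v) S"
  then have SV: "S \<subseteq> {..<n}" by (simp add: zero_forcing_set_def)
  show "S \<subseteq> {..<n} \<and> (\<exists>i<n. i \<in> S \<and> Suc i mod n \<in> S)"
  proof (rule ccontr)
    assume "\<not> ?thesis"
    then have "\<forall>i<n. i \<in> S \<longrightarrow> Suc i mod n \<notin> S" using SV by blast
    from no_adj[OF n3 un vn this] z have "{..<n} \<subseteq> S" by (simp add: zero_forcing_set_def)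
    then have "0 \<in> S" "1 \<in> S" using n3 by auto
    moreover have "0 < n" "Suc 0 mod n = 1" using n3 by auto
    ultimately show False using \<open>\<forall>i<n. i \<in> S \<longrightarrow> Suc i mod n \<notin> S\<close> by metis
  qed
next
  assume "S \<subseteq> {..<n} \<and> (\<exists>i<n. i \<in> S \<and> Suc i mod n \<in> S)"
  then show "zero_forcing_set {..<n} (add_edge (cycle_adj n) u v) S"
    using adj_all[OF n3 un vn uv] by (auto simp: zero_forcing_set_def)
qed

lemma cycle_as_add:
  assumes "n \<ge> (3::nat)"
  shows "add_edge (cycle_adj n) 0 1 = cycle_adj n"
  using assms by (auto simp: add_edge_def cycle_adj_def fun_eq_iff)

theorem proposition2p30:
  fixes n u v :: nat
  assumes "n \<ge> 4" and "u < n" and "v < n" and "u \<noteq> v" and "\<not> cycle_adj n u v"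
  shows "ZF_TAR {..<n} (cycle_adj n) = ZF_TAR {..<n} (add_edge (cycle_adj n) u v)
       \<and> (\<forall>S. zero_forcing_set {..<n} (cycle_adj n) S
              \<longleftrightarrow> zero_forcing_set {..<n} (add_edge (cycle_adj n) u v) S)"
proof -
  have n3: "n \<ge> 3" using assms by simp
  have eq: "zero_forcing_set {..<n} (cycle_adj n) S
              \<longleftrightarrow> zero_forcing_set {..<n} (add_edge (cycle_adj n) u v) S" for S
  proof -
    have "zero_forcing_set {..<n} (cycle_adj n) S = zero_forcing_set {..<n} (add_edge (cycle_adj n) 0 1) S"
      using cycle_as_add[OF n3] by simp
    also have "\<dots> = (S \<subseteq> {..<n} \<and> (\<exists>i<n. i \<in> S \<and> Suc i mod n \<in> S))"
      by (rule zf_char) (use n3 in auto)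
    also have "\<dots> = zero_forcing_set {..<n} (add_edge (cycle_adj n) u v) S"
      by (rule zf_char[symmetric]) (use n3 assms in auto)
    finally show ?thesis .
  qed
  show ?thesis by (simp add: ZF_TAR_def eq)
qed

end
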